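(* Let $\mathcal H$ be the $5$-uniform hypergraph defined below. Then $\mathcal{H}\setminus\{z\}$ has a fast winning strategy; that is, in the game in which FP and SP alternately claim previously unclaimed edges of $K^5_{\mathbb{N}}$ (FP first), SP has a strategy ensuring that after his seventh move his claimed edges contain a copy of $\mathcal{H}\setminus\{z\}$, regardless of FP's moves.
   Context: $\mathcal{H}$ has vertex set $\{z, v_1,\dots,v_9\}$ and edges $r=\{z,v_1,v_3,v_5,v_8\}$, $g=\{z,v_2,v_4,v_7,v_9\}$, $a=\{v_1,v_4,v_6,v_8,v_9\}$, $b=\{v_9,v_1,v_2,v_3,v_4\}$, and $e_i=\{v_i,v_{i+1},v_{i+2},v_{i+3},v_{i+4}\}$ for $i=1,\dots,5$. $\mathcal{H}\setminus\{z\}$ is obtained by deleting $z$ and the edges $r,g$; it has $7$ edges. $K^5_{\mathbb N}$ is the complete $5$-uniform hypergraph on $\mathbb N$; a copy is a subhypergraph isomorphic to the given one. *)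

theory Defs
  imports Main
begin

text \<open>The hypergraph H: vertex z is encoded as 0, vertex v_i as i (1 \<le> i \<le> 9).\<close>

definition H_vertices :: "nat set" where
  "H_vertices = {0..9}"

definition H_edges :: "nat set set" where
  "H_edges =
     {{0,1,3,5,8}, {0,2,4,7,9}, {1,4,6,8,9}, {9,1,2,3,4}}
     \<union> {{i, i+1, i+2, i+3, i+4} | i. 1 \<le> i \<and> i \<le> 5}"

definition del_vertex_V :: "nat set \<Rightarrow> nat \<Rightarrow> nat set" where
  "del_vertex_V V x = V - {x}"

definition del_vertex_E :: "nat set set \<Rightarrow> nat \<Rightarrow> nat set set" where
  "del_vertex_E E x = {e \<in> E. x \<notin> e}"

definition contains_copy :: "nat set set \<Rightarrow> nat set \<Rightarrow> nat set set \<Rightarrow> bool" where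
  "contains_copy S V E \<longleftrightarrow> (\<exists>\<phi> :: nat \<Rightarrow> nat. inj_on \<phi> V \<and> (\<forall>e\<in>E. \<phi> ` e \<in> S))"

definition legal :: "nat set list \<Rightarrow> nat set \<Rightarrow> bool" where
  "legal h e \<longleftrightarrow> card e = 5 \<and> e \<notin> set h"

text \<open>Since fp ranges over all sequences, this covers all adaptive FP strategies.\<close>
fun play :: "(nat set list \<Rightarrow> nat set) \<Rightarrow> (nat \<Rightarrow> nat set) \<Rightarrow> nat \<Rightarrow> nat set list" where
  "play \<sigma> fp 0 = []"
| "play \<sigma> fp (Suc i) =
     (let h = play \<sigma> fp i @ [fp i] in h @ [\<sigma> h])"

text \<open>SP's claimed edges in a history (odd positions, FP moves first).\<close>
definition sp_edges :: "nat set list \<Rightarrow> nat set set" where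
  "sp_edges h = {h ! j | j. j < length h \<and> odd j}"

definition sp_fast_win :: "nat \<Rightarrow> nat set \<Rightarrow> nat set set \<Rightarrow> bool" where
  "sp_fast_win n V E \<longleftrightarrow>
     (\<exists>\<sigma>. \<forall>fp.
        (\<forall>i<n. legal (play \<sigma> fp i) (fp i)) \<longrightarrow>
          (\<forall>i<n. legal (play \<sigma> fp i @ [fp i]) (\<sigma> (play \<sigma> fp i @ [fp i])))
          \<and> contains_copy (sp_edges (play \<sigma> fp n)) V E)"

end

theory Submission
  imports Defs
begin

lemma minmax5:
  fixes a b c d e :: nat
  assumes "a<b" "b<c" "c<d" "d<e"
  shows "Min {a,b,c,d,e} = a" "Max {a,b,c,d,e} = e" "card {a,b,c,d,e} = 5"
  using assms by (simp_all add: min_def max_def)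

definition mx :: "nat set list \<Rightarrow> nat" where
  "mx h = Suc (Max (\<Union>(set h)))"

lemma mx_gt: "\<forall>Z\<in>set h. finite Z \<Longrightarrow> Z \<in> set h \<Longrightarrow> v \<in> Z \<Longrightarrow> v < mx h"
  unfolding mx_def
  by (metis List.finite_set Max_ge UnionI finite_Union le_imp_less_Suc)

definition xv :: "nat set list \<Rightarrow> nat \<Rightarrow> nat" where
  "xv h i = (if i \<le> 5 then Min (h ! (2*i - 1)) else Max (h ! (2*i - 9)))"

definition "Y1 h = {xv h 1, xv h 2, xv h 3, xv h 4, xv h 9}"
definition "A1 h = {xv h 1, xv h 4, xv h 6, xv h 8, xv h 9}"
definition "B1 h = {xv h 1, xv h 3, xv h 5, xv h 8, xv h 9}"
definition "Y2 h = {xv h 1, xv h 6, xv h 7, xv h 8, xv h 9}"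
definition "A2 h = {xv h 1, xv h 2, xv h 4, xv h 6, xv h 9}"
definition "B2 h = {xv h 1, xv h 2, xv h 5, xv h 7, xv h 9}"

definition strat :: "nat set list \<Rightarrow> nat set" where
  "strat h = (if length h = 1 then {mx h, mx h+1, mx h+2, mx h+3, mx h+4}
    else if length h < 10 then insert (mx h) (h!(length h - 2) - {Min (h!(length h - 2))})
    else if length h = 11 then (if h!10 \<in> {Y1 h, A1 h, B1 h} then Y2 h else Y1 h)
    else if h!11 = Y1 h then (if A1 h \<in> set h then B1 h else A1 h)
    else (if A2 h \<in> set h then B2 h else A2 h))"

lemma play_Suc: "play \<sigma> fp (Suc k) = play \<sigma> fp k @ [fp k, \<sigma> (play \<sigma> fp k @ [fp k])]"
  by (simp add: Let_def)

lemma play_Suc': "play \<sigma> fp (Suc k) = (play \<sigma> fp k @ [fp k]) @ [\<sigma> (play \<sigma> fp k @ [fp k])]"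
  by (simp add: Let_def)

lemma fin5: "card Z = 5 \<Longrightarrow> finite Z"
  by (metis card.infinite zero_neq_numeral)


lemma fresh_notin: "\<forall>Z\<in>set h. finite Z \<Longrightarrow> mx h \<in> X \<Longrightarrow> X \<notin> set h"
  by (metis mx_gt less_irrefl)

lemma neqI: "(a::nat) \<in> X \<Longrightarrow> a \<notin> Y \<Longrightarrow> X \<noteq> Y" by blast

lemma sp_mem: "j < length h \<Longrightarrow> odd j \<Longrightarrow> h ! j \<in> sp_edges h"
  unfolding sp_edges_def by blast

lemma filt_ins: "{e \<in> insert a A. P e} = (if P a then insert a {e \<in> A. P e} else {e \<in> A. P e})"
  by auto
lemma filt_emp: "{e \<in> {}. P e} = {}" by auto
lemma five: "{{i, i+1, i+2, i+3, i+4} | i::nat. 1 \<le> i \<and> i \<le> 5} = {{1,2,3,4,5},{2,3,4,5,6},{3,4,5,6,7},{4,5,6,7,8},{5,6,7,8,9}}"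
proof -
  have "{1..5::nat} = {1,2,3,4,5}" by auto
  have "{{i, i+1, i+2, i+3, i+4} | i::nat. 1 \<le> i \<and> i \<le> 5} = (\<lambda>i. {i, i+1, i+2, i+3, i+4}) ` {1..5}"
    by auto
  also have "\<dots> = (\<lambda>i. {i, i+1, i+2, i+3, i+4}) ` {1,2,3,4,5}" using \<open>{1..5::nat} = {1,2,3,4,5}\<close> by simp
  also have "\<dots> = {{1,1+1,1+2,1+3,1+4},{2,2+1,2+2,2+3,2+4},{3,3+1,3+2,3+3,3+4},{4,4+1,4+2,4+3,4+4},{5,5+1,5+2,5+3,5+4}}"
    by (simp only: image_insert image_empty)
  also have "\<dots> = {{1,2,3,4,5},{2,3,4,5,6},{3,4,5,6,7},{4,5,6,7,8},{5,6,7,8,9}}"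
    by (simp only: numeral_plus_one one_plus_numeral numeral_plus_numeral add_num_simps one_add_one)
  finally show ?thesis .
qed
lemma delE: "del_vertex_E H_edges 0 = {{1,4,6,8,9},{9,1,2,3,4},{1,2,3,4,5},{2,3,4,5,6},{3,4,5,6,7},{4,5,6,7,8},{5,6,7,8,9}}"
  unfolding del_vertex_E_def H_edges_def five
  by (simp only: Un_insert_left Un_empty_left filt_ins filt_emp) simp

lemma enum9: "(i::nat) \<in> {0..9} - {0} \<Longrightarrow> i = 1 \<or> i = 2 \<or> i = 3 \<or> i = 4 \<or> i = 5 \<or> i = 6 \<or> i = 7 \<or> i = 8 \<or> i = 9"
  by (simp, linarith)

lemma main_play:
  assumes leg: "\<forall>i<7. legal (play strat fp i) (fp i)"
  shows "(\<forall>i<7. legal (play strat fp i @ [fp i]) (strat (play strat fp i @ [fp i])))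
          \<and> contains_copy (sp_edges (play strat fp 7)) (del_vertex_V H_vertices 0) (del_vertex_E H_edges 0)"
proof -
  have l0: "card (fp 0) = 5" using leg[rule_format, of 0] by (simp add: legal_def)
  define h0 where "h0 = [fp 0]"
  define m1 where "m1 = mx h0"
  define s1 where "s1 = {m1, m1+1, m1+2, m1+3, m1+4}"
  have P1: "play strat fp 1 = [fp 0, s1]"
    using play_Suc[of strat fp 0] by (simp add: strat_def s1_def m1_def h0_def)
  have l1: "card (fp 1) = 5" "fp 1 \<notin> set [fp 0, s1]"
    using leg[rule_format, of 1] P1 by (simp_all add: legal_def)
  have s1c: "card s1 = 5" "Min s1 = m1" "Max s1 = m1+4" unfolding s1_def by (simp_all add: minmax5)
  have f0: "\<forall>Z\<in>set h0. finite Z" using fin5 l0 h0_def by auto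
  have L1: "legal h0 s1" unfolding legal_def using s1c fresh_notin[OF f0, of s1] by (simp add: s1_def m1_def)

  define h1 where "h1 = [fp 0, s1, fp 1]"
  define m2 where "m2 = mx h1"
  define s2 where "s2 = {m1+1, m1+2, m1+3, m1+4, m2}"
  have f1: "\<forall>Z\<in>set h1. finite Z" unfolding h1_def using fin5[OF l0] fin5[OF l1(1)] fin5[OF s1c(1)] by simp
  have c2: "m1+4 < m2" using mx_gt[OF f1, of s1] unfolding m2_def h1_def s1_def by simp
  have P2: "play strat fp 2 = [fp 0, s1, fp 1, s2]"
  proof -
    have "strat h1 = insert m2 (s1 - {m1})" by (simp add: strat_def s1c m2_def h1_def)
    also have "\<dots> = s2" unfolding s1_def s2_def by auto
    finally show ?thesis using play_Suc[of strat fp 1] P1 h1_def by (simp add: numeral_2_eq_2)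
  qed
  have l2: "card (fp 2) = 5" "fp 2 \<notin> set [fp 0, s1, fp 1, s2]"
    using leg[rule_format, of 2] P2 by (simp_all add: legal_def)
  have s2c: "card s2 = 5" "Min s2 = m1+1" "Max s2 = m2" unfolding s2_def using c2 by (simp_all add: minmax5)
  have L2: "legal h1 s2" unfolding legal_def using s2c fresh_notin[OF f1, of s2] by (simp add: s2_def m2_def)

  define h2 where "h2 = [fp 0, s1, fp 1, s2, fp 2]"
  define m3 where "m3 = mx h2"
  define s3 where "s3 = {m1+2, m1+3, m1+4, m2, m3}"
  have f2: "\<forall>Z\<in>set h2. finite Z" using f1 fin5[OF l2(1)] fin5[OF s2c(1)] unfolding h2_def h1_def by simp
  have c3: "m2 < m3" using mx_gt[OF f2, of s2] unfolding m3_def h2_def s2_def by simp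
  have P3: "play strat fp 3 = h2 @ [s3]"
  proof -
    have "strat h2 = insert m3 (s2 - {m1+1})" by (simp add: strat_def s2c m3_def h2_def)
    also have "\<dots> = s3" unfolding s2_def s3_def using c2 c3 by auto
    finally show ?thesis using play_Suc[of strat fp 2, simplified] P2 h2_def by simp
  qed
  have l3: "card (fp 3) = 5" "fp 3 \<notin> set (h2 @ [s3])"
    using leg[rule_format, of 3] P3 by (simp_all add: legal_def)
  have s3c: "card s3 = 5" "Min s3 = m1+2" "Max s3 = m3" unfolding s3_def using c2 c3 by (simp_all add: minmax5)
  have L3: "legal h2 s3" unfolding legal_def using s3c fresh_notin[OF f2, of s3] by (simp add: s3_def m3_def)

  define h3 where "h3 = [fp 0, s1, fp 1, s2, fp 2, s3, fp 3]"
  define m4 where "m4 = mx h3"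
  define s4 where "s4 = {m1+3, m1+4, m2, m3, m4}"
  have f3: "\<forall>Z\<in>set h3. finite Z" using f2 fin5[OF l3(1)] fin5[OF s3c(1)] unfolding h3_def h2_def by simp
  have c4: "m3 < m4" using mx_gt[OF f3, of s3] unfolding m4_def h3_def s3_def by simp
  have P4: "play strat fp 4 = h3 @ [s4]"
  proof -
    have "strat h3 = insert m4 (s3 - {m1+2})" by (simp add: strat_def s3c m4_def h3_def)
    also have "\<dots> = s4" unfolding s3_def s4_def using c2 c3 c4 by auto
    finally show ?thesis using play_Suc[of strat fp 3, simplified] P3 h3_def h2_def by simp
  qed
  have l4: "card (fp 4) = 5" "fp 4 \<notin> set (h3 @ [s4])"
    using leg[rule_format, of 4] P4 by (simp_all add: legal_def)
  have s4c: "card s4 = 5" "Min s4 = m1+3" "Max s4 = m4" unfolding s4_def using c2 c3 c4 by (simp_all add: minmax5)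
  have L4: "legal h3 s4" unfolding legal_def using s4c fresh_notin[OF f3, of s4] by (simp add: s4_def m4_def)

  define h4 where "h4 = [fp 0, s1, fp 1, s2, fp 2, s3, fp 3, s4, fp 4]"
  define m5 where "m5 = mx h4"
  define s5 where "s5 = {m1+4, m2, m3, m4, m5}"
  have f4: "\<forall>Z\<in>set h4. finite Z" using f3 fin5[OF l4(1)] fin5[OF s4c(1)] unfolding h4_def h3_def by simp
  have c5: "m4 < m5" using mx_gt[OF f4, of s4] unfolding m5_def h4_def s4_def by simp
  have P5: "play strat fp 5 = h4 @ [s5]"
  proof -
    have "strat h4 = insert m5 (s4 - {m1+3})" by (simp add: strat_def s4c m5_def h4_def)
    also have "\<dots> = s5" unfolding s4_def s5_def using c2 c3 c4 c5 by auto
    finally show ?thesis using play_Suc[of strat fp 4, simplified] P4 h4_def h3_def by simp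
  qed
  have l5: "card (fp 5) = 5" "fp 5 \<notin> set (h4 @ [s5])"
    using leg[rule_format, of 5] P5 by (simp_all add: legal_def)
  have s5c: "card s5 = 5" "Min s5 = m1+4" "Max s5 = m5" unfolding s5_def using c2 c3 c4 c5 by (simp_all add: minmax5)
  have L5: "legal h4 s5" unfolding legal_def using s5c fresh_notin[OF f4, of s5] by (simp add: s5_def m5_def)
  have old5: "\<And>Z. Z \<in> set h4 \<Longrightarrow> m5 \<notin> Z" using mx_gt[OF f4] m5_def by blast

  define h5 where "h5 = h4 @ [s5, fp 5]"
  define Y1v where "Y1v = {m1, m1+1, m1+2, m1+3, m5}"
  define A1v where "A1v = {m1, m1+3, m2, m4, m5}"
  define B1v where "B1v = {m1, m1+2, m1+4, m4, m5}"
  define Y2v where "Y2v = {m1, m2, m3, m4, m5}"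
  define A2v where "A2v = {m1, m1+1, m1+3, m2, m5}"
  define B2v where "B2v = {m1, m1+1, m1+4, m3, m5}"
  note cs = c2 c3 c4 c5
  have XV: "\<And>h. h!1 = s1 \<Longrightarrow> h!3 = s2 \<Longrightarrow> h!5 = s3 \<Longrightarrow> h!7 = s4 \<Longrightarrow> h!9 = s5 \<Longrightarrow>
     Y1 h = Y1v \<and> A1 h = A1v \<and> B1 h = B1v \<and> Y2 h = Y2v \<and> A2 h = A2v \<and> B2 h = B2v"
    by (simp add: Y1_def A1_def B1_def Y2_def A2_def B2_def xv_def s1c s2c s3c s4c s5c
        Y1v_def A1v_def B1v_def Y2v_def A2v_def B2v_def)
  have cards: "card Y1v = 5" "card A1v = 5" "card B1v = 5" "card Y2v = 5" "card A2v = 5" "card B2v = 5"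
    unfolding Y1v_def A1v_def B1v_def Y2v_def A2v_def B2v_def using cs by (simp_all add: minmax5)
  have mem15: "m1 \<in> Y1v \<and> m5 \<in> Y1v" "m1 \<in> A1v \<and> m5 \<in> A1v" "m1 \<in> B1v \<and> m5 \<in> B1v"
    "m1 \<in> Y2v \<and> m5 \<in> Y2v" "m1 \<in> A2v \<and> m5 \<in> A2v" "m1 \<in> B2v \<and> m5 \<in> B2v"
    unfolding Y1v_def A1v_def B1v_def Y2v_def A2v_def B2v_def by simp_all
  have n1: "Y2v \<noteq> Y1v" "Y2v \<noteq> A1v" "Y2v \<noteq> B1v"
    unfolding Y1v_def A1v_def B1v_def Y2v_def by (rule neqI[of m3]; use cs in auto)+
  have n2: "A1v \<noteq> B1v" unfolding A1v_def B1v_def by (rule neqI[of m2]; use cs in auto)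
  have n2': "A1v \<noteq> Y1v" "B1v \<noteq> Y1v" unfolding A1v_def B1v_def Y1v_def by (rule neqI[of m4]; use cs in auto)+
  have n3: "A2v \<noteq> Y1v" unfolding A2v_def Y1v_def by (rule neqI[of m2]; use cs in auto)
  have n3': "A2v \<noteq> A1v" "A2v \<noteq> B1v" "A2v \<noteq> Y2v"
    unfolding A2v_def A1v_def B1v_def Y2v_def by (rule neqI[of "m1+1"]; use cs in auto)+
  have n4: "B2v \<noteq> Y1v" "B2v \<noteq> A2v" unfolding B2v_def Y1v_def A2v_def by (rule neqI[of m3]; use cs in auto)+
  have n4': "B2v \<noteq> A1v" "B2v \<noteq> B1v" "B2v \<noteq> Y2v"
    unfolding B2v_def A1v_def B1v_def Y2v_def by (rule neqI[of "m1+1"]; use cs in auto)+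
  have m1s5: "m1 \<notin> s5" unfolding s5_def using cs by auto
  define s6 where "s6 = (if fp 5 \<in> {Y1v, A1v, B1v} then Y2v else Y1v)"
  have P6: "play strat fp 6 = h5 @ [s6]"
  proof -
    have X: "Y1 h5 = Y1v \<and> A1 h5 = A1v \<and> B1 h5 = B1v \<and> Y2 h5 = Y2v \<and> A2 h5 = A2v \<and> B2 h5 = B2v"
      by (rule XV) (simp_all add: h5_def h4_def)
    have "strat h5 = s6" using X by (simp add: strat_def h5_def h4_def s6_def)
    then show ?thesis using play_Suc[of strat fp 5, simplified] P5 h5_def by simp
  qed
  have mem5: "\<And>X. m5 \<in> X \<Longrightarrow> m1 \<in> X \<Longrightarrow> X \<in> set h5 \<Longrightarrow> X = fp 5"
    using old5 m1s5 unfolding h5_def by auto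
  have L6: "legal h5 s6"
  proof -
    have "card s6 = 5" using cards by (simp add: s6_def)
    moreover have "s6 \<notin> set h5"
    proof
      assume a: "s6 \<in> set h5"
      have "m5 \<in> s6" "m1 \<in> s6" using mem15 by (simp_all add: s6_def)
      then have "s6 = fp 5" using mem5 a by blast
      then show False using n1 unfolding s6_def by (auto split: if_splits)
    qed
    ultimately show ?thesis by (simp add: legal_def)
  qed
  have l6: "card (fp 6) = 5" "fp 6 \<notin> set (h5 @ [s6])"
    using leg[rule_format, of 6] P6 by (simp_all add: legal_def)
  define h6 where "h6 = h5 @ [s6, fp 6]"
  define s7 where "s7 = (if s6 = Y1v then (if A1v \<in> set h6 then B1v else A1v) else (if A2v \<in> set h6 then B2v else A2v))"
  have P7: "play strat fp 7 = h6 @ [s7]"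
  proof -
    have X: "Y1 h6 = Y1v \<and> A1 h6 = A1v \<and> B1 h6 = B1v \<and> Y2 h6 = Y2v \<and> A2 h6 = A2v \<and> B2 h6 = B2v"
      by (rule XV) (simp_all add: h6_def h5_def h4_def)
    have len: "length h6 = 13" "h6 ! 11 = s6" by (simp_all add: h6_def h5_def h4_def)
    have "strat h6 = s7" using X len unfolding strat_def s7_def by simp
    then show ?thesis using play_Suc[of strat fp 6, simplified] P6 h6_def by simp
  qed
  have mem6: "\<And>X. m5 \<in> X \<Longrightarrow> m1 \<in> X \<Longrightarrow> X \<in> set h6 \<Longrightarrow> X = fp 5 \<or> X = s6 \<or> X = fp 6"
    using mem5 unfolding h6_def by auto
  have L7: "legal h6 s7"
  proof -
    have "card s7 = 5" using cards by (simp add: s7_def)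
    moreover have "s7 \<notin> set h6"
    proof (cases "fp 5 \<in> {Y1v, A1v, B1v}")
      case T5: True
      then have s6v: "s6 = Y2v" by (simp add: s6_def)
      have f5: "fp 5 = Y1v \<or> fp 5 = A1v \<or> fp 5 = B1v" using T5 by simp
      show ?thesis
      proof (cases "A2v \<in> set h6")
        case True
        then have "A2v = fp 5 \<or> A2v = s6 \<or> A2v = fp 6" using mem6 mem15(5) by blast
        then have a6: "A2v = fp 6" using f5 n3 n3' s6v by metis
        have "B2v \<notin> set h6"
        proof
          assume "B2v \<in> set h6"
          then have "B2v = fp 5 \<or> B2v = s6 \<or> B2v = fp 6" using mem6 mem15(6) by blast
          then show False using f5 n4 n4' s6v a6 by metis
        qed
        moreover have "s7 = B2v" using True s6v n1(1) by (simp add: s7_def)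
        ultimately show ?thesis by simp
      next
        case False
        moreover have "s7 = A2v" using False s6v n1(1) by (simp add: s7_def)
        ultimately show ?thesis by simp
      qed
    next
      case F5: False
      then have s6v: "s6 = Y1v" by (simp add: s6_def)
      have f5: "fp 5 \<noteq> Y1v" "fp 5 \<noteq> A1v" "fp 5 \<noteq> B1v" using F5 by simp_all
      show ?thesis
      proof (cases "A1v \<in> set h6")
        case True
        then have "A1v = fp 5 \<or> A1v = s6 \<or> A1v = fp 6" using mem6 mem15(2) by blast
        then have a6: "A1v = fp 6" using f5 n2' s6v by metis
        have "B1v \<notin> set h6"
        proof
          assume "B1v \<in> set h6"
          then have "B1v = fp 5 \<or> B1v = s6 \<or> B1v = fp 6" using mem6 mem15(3) by blast
          then show False using f5 n2 n2' s6v a6 by metis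
        qed
        moreover have "s7 = B1v" using True s6v by (simp add: s7_def)
        ultimately show ?thesis by simp
      next
        case False
        moreover have "s7 = A1v" using False s6v by (simp add: s7_def)
        ultimately show ?thesis by simp
      qed
    qed
    ultimately show ?thesis by (simp add: legal_def)
  qed
  have Q0: "play strat fp 0 @ [fp 0] = h0" by (simp add: h0_def)
  have Q1: "play strat fp 1 @ [fp 1] = h1" unfolding P1 by (simp add: h1_def)
  have Q2: "play strat fp 2 @ [fp 2] = h2" unfolding P2 by (simp add: h2_def)
  have Q3: "play strat fp 3 @ [fp 3] = h3" unfolding P3 by (simp add: h3_def h2_def)
  have Q4: "play strat fp 4 @ [fp 4] = h4" unfolding P4 by (simp add: h4_def h3_def)
  have Q5: "play strat fp 5 @ [fp 5] = h5" unfolding P5 by (simp add: h5_def)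
  have Q6: "play strat fp 6 @ [fp 6] = h6" unfolding P6 by (simp add: h6_def)
  have R0: "strat h0 = s1"
    by (simp add: strat_def s1_def m1_def h0_def)
  have R1: "strat h1 = s2"
    using play_Suc'[of strat fp 1] P2 unfolding Q1 by (simp add: numeral_2_eq_2 h1_def del: play.simps)
  have R2: "strat h2 = s3"
    using play_Suc'[of strat fp 2] P3 unfolding Q2 by (simp del: play.simps)
  have R3: "strat h3 = s4"
    using play_Suc'[of strat fp 3] P4 unfolding Q3 by (simp del: play.simps)
  have R4: "strat h4 = s5"
    using play_Suc'[of strat fp 4] P5 unfolding Q4 by (simp del: play.simps)
  have R5: "strat h5 = s6"
    using play_Suc'[of strat fp 5] P6 unfolding Q5 by (simp del: play.simps)
  have R6: "strat h6 = s7"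
    using play_Suc'[of strat fp 6] P7 unfolding Q6 by (simp del: play.simps)
  have LEG: "\<forall>i<7. legal (play strat fp i @ [fp i]) (strat (play strat fp i @ [fp i]))"
  proof (intro allI impI)
    fix i :: nat assume "i < 7"
    then have "i = 0 \<or> i = 1 \<or> i = 2 \<or> i = 3 \<or> i = 4 \<or> i = 5 \<or> i = 6" by linarith
    then show "legal (play strat fp i @ [fp i]) (strat (play strat fp i @ [fp i]))"
      using Q0 Q1 Q2 Q3 Q4 Q5 Q6 R0 R1 R2 R3 R4 R5 R6 L1 L2 L3 L4 L5 L6 L7
      by (elim disjE) simp_all
  qed
  define S where "S = sp_edges (play strat fp 7)"
  have SM: "\<And>j. j < 14 \<Longrightarrow> odd j \<Longrightarrow> (h6 @ [s7]) ! j \<in> S"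
    unfolding S_def P7 by (rule sp_mem) (simp_all add: h6_def h5_def h4_def)
  have Sm: "s1 \<in> S" "s2 \<in> S" "s3 \<in> S" "s4 \<in> S" "s5 \<in> S" "s6 \<in> S" "s7 \<in> S"
    using SM[of 1] SM[of 3] SM[of 5] SM[of 7] SM[of 9] SM[of 11] SM[of 13]
    by (simp_all add: h6_def h5_def h4_def)
  define x where "x = (\<lambda>i::nat. if i = 1 then m1 else if i = 2 then m1+1 else if i = 3 then m1+2
      else if i = 4 then m1+3 else if i = 5 then m1+4 else if i = 6 then m2 else if i = 7 then m3
      else if i = 8 then m4 else m5)"
  define A where "A = ({0..9} - {0::nat})"
  have injx: "inj_on x A"
  proof (rule inj_onI)
    fix i j assume i: "i \<in> A" and j: "j \<in> A" and e: "x i = x j"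
    from enum9[OF i[unfolded A_def]] enum9[OF j[unfolded A_def]] e show "i = j"
      using cs unfolding x_def by (elim disjE; simp)
  qed
  have perm: "inj_on (x \<circ> \<pi>) A" if p1: "\<And>i. i \<in> A \<Longrightarrow> \<pi> i \<in> A" and p2: "inj_on \<pi> A" for \<pi>
    by (rule comp_inj_on[OF p2 inj_on_subset[OF injx]]) (use p1 in auto)
  have VA: "del_vertex_V H_vertices 0 = A" by (simp add: del_vertex_V_def H_vertices_def A_def)
  have C: "contains_copy S A (del_vertex_E H_edges 0)"
  proof (cases "s6 = Y1v")
    case True
    then have f5: "fp 5 \<notin> {Y1v, A1v, B1v}" using n1 by (auto simp: s6_def split: if_splits)
    show ?thesis
    proof (cases "s7 = A1v")
      case True
      show ?thesis unfolding contains_copy_def delE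
        apply (rule exI[of _ x])
        using injx Sm \<open>s6 = Y1v\<close> True
        by (simp add: x_def s1_def s2_def s3_def s4_def s5_def Y1v_def A1v_def insert_commute)
    next
      case False
      then have s7v: "s7 = B1v" using \<open>s6 = Y1v\<close> by (simp add: s7_def split: if_splits)
      define \<pi> where "\<pi> = (\<lambda>i::nat. if i \<le> 8 then 9 - i else i)"
      have "inj_on (x \<circ> \<pi>) A"
      proof (rule perm)
        show "\<And>i. i \<in> A \<Longrightarrow> \<pi> i \<in> A" unfolding A_def \<pi>_def by auto
        show "inj_on \<pi> A" unfolding A_def \<pi>_def by (rule inj_onI) (auto split: if_splits)
      qed
      then show ?thesis unfolding contains_copy_def delE
        apply (intro exI[of _ "x \<circ> \<pi>"])
        using Sm \<open>s6 = Y1v\<close> s7v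
        by (simp add: x_def \<pi>_def s1_def s2_def s3_def s4_def s5_def Y1v_def B1v_def insert_commute)
    qed
  next
    case False
    then have s6v: "s6 = Y2v" by (simp add: s6_def split: if_splits)
    show ?thesis
    proof (cases "s7 = A2v")
      case True
      define \<pi> where "\<pi> = (\<lambda>i::nat. 10 - i)"
      have "inj_on (x \<circ> \<pi>) A"
      proof (rule perm)
        show "\<And>i. i \<in> A \<Longrightarrow> \<pi> i \<in> A" unfolding A_def \<pi>_def by auto
        show "inj_on \<pi> A" unfolding A_def \<pi>_def by (rule inj_onI) (auto split: if_splits)
      qed
      then show ?thesis unfolding contains_copy_def delE
        apply (intro exI[of _ "x \<circ> \<pi>"])
        using Sm s6v True
        by (simp add: x_def \<pi>_def s1_def s2_def s3_def s4_def s5_def Y2v_def A2v_def insert_commute)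
    next
      case False
      then have s7v: "s7 = B2v" using s6v n1(1) by (simp add: s7_def split: if_splits)
      define \<pi> where "\<pi> = (\<lambda>i::nat. if i \<le> 8 then i + 1 else 1)"
      have "inj_on (x \<circ> \<pi>) A"
      proof (rule perm)
        show "\<And>i. i \<in> A \<Longrightarrow> \<pi> i \<in> A" unfolding A_def \<pi>_def by auto
        show "inj_on \<pi> A" unfolding A_def \<pi>_def by (rule inj_onI) (auto split: if_splits)
      qed
      then show ?thesis unfolding contains_copy_def delE
        apply (intro exI[of _ "x \<circ> \<pi>"])
        using Sm s6v s7v
        by (simp add: x_def \<pi>_def s1_def s2_def s3_def s4_def s5_def Y2v_def B2v_def insert_commute)
    qed
  qed
  have "contains_copy (sp_edges (play strat fp 7)) (del_vertex_V H_vertices 0) (del_vertex_E H_edges 0)"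
    using C unfolding VA S_def .
  then show ?thesis using LEG by blast
qed
theorem lemma4p1:
  shows "sp_fast_win 7 (del_vertex_V H_vertices 0) (del_vertex_E H_edges 0)"
  unfolding sp_fast_win_def
  by (intro exI[of _ strat] allI impI) (rule main_play)

end
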